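(* Let $a,b\in\mathbb{R}$ with one of the following: (i) $b<0$, $a>0$ and $(J,E)\in D_1$; (ii) $b>0$, $a\ge 0$ and $(J,E)\in D_2$; (iii) $b>0$, $a<0$ and $(J,E)\in D_3$. Let $\Pi(y)=-by^3-2ay^2+4Ey-2J^2$, and denote its roots by $0<y_1<y_2<y_3$ in case (i), and by $y_3<0<y_1<y_2$ in cases (ii) and (iii). Then $$T(J,E)=\sqrt{2}\int_{y_1}^{y_2}\frac{dy}{\sqrt{-b(y-y_1)(y-y_2)(y-y_3)}}=2\sqrt{2}\int_0^{\pi/2}\frac{d\phi}{\sqrt{b(S(\phi)-y_3)}},$$ where $S(\phi)=y_1\cos^2\phi+y_2\sin^2\phi$.
   Context: Consider the ODE $u_{xx}+au+b|u|^2u=0$ for $u:\mathbb{R}\to\mathbb{C}$, with conserved quantities $J=\operatorname{Im}(u\bar u_x)$ and $E=\frac12|u_x|^2+\frac a2|u|^2+\frac b4|u|^4$. For $J\neq 0$, writing $u=re^{i\phi}$, one has $E=\frac{r_x^2}{2}+V_J(r)$ with potential $V_J(r)=\frac{J^2}{2r^2}+a\frac{r^2}{2}+b\frac{r^4}{4}$. For $J\ge 0$ one parametrizes $J=Q(Q^2-a)/b$ (with $\frac a3<Q^2<a$ when $b<0$; with $Q^2\ge a$ when $b>0,a\ge 0$; with $Q\in\mathbb{R}$ when $b>0,a<0$; $Q$ of the same sign as $J$) and sets $E_-(J)=\frac{1}{4b}(Q^2-a)(3Q^2+a)$ (the value of $V_J$ at its local minimum $r_Q=\sqrt{(Q^2-a)/b}$).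 When $b<0$ and $0<J^2<\frac{4a^3}{27b^2}$, one also writes $J=q(q^2-a)/b$ with $0<q^2<a/3$, $q$ of the sign of $J$, and sets $E_+(J)=\frac1{4b}(q^2-a)(3q^2+a)$ (value of $V_J$ at its local maximum $r_q=\sqrt{(q^2-a)/b}$). Domains: $D_1=\{(J,E):0<J<\sqrt{\frac{4a^3}{27b^2}},\ E_-(J)<E<E_+(J)\}$ (for $b<0,a>0$); $D_2=\{(J,E):J>0,\ E>E_-(J)\}$ (for $b>0,a\ge0$); $D_3=\{(J,E):J>0,\ E>E_-(J)\}$ (for $b>0,a<0$). For $(J,E)$ in these domains, $E-V_J(r)$ has positive roots $r_1<r_2$ (and a third $r_3>r_2$ in the case $b<0$), and the fundamental period of the modulus of the corresponding solution $u$ is $T(J,E)=2\int_{r_1}^{r_2}\frac{dr}{\sqrt{2(E-V_J(r))}}$. *)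

theory Defs
  imports "HOL-Analysis.Analysis"
begin

definition VJ :: "real \<Rightarrow> real \<Rightarrow> real \<Rightarrow> real \<Rightarrow> real" where
  "VJ a b J r = J^2 / (2 * r^2) + a * r^2 / 2 + b * r^4 / 4"

definition Qpar :: "real \<Rightarrow> real \<Rightarrow> real \<Rightarrow> real" where
  "Qpar a b J = (THE Q. J = Q * (Q^2 - a) / b \<and> sgn Q = sgn J \<and>
      (if b < 0 then a / 3 < Q^2 \<and> Q^2 < a else if 0 \<le> a then a \<le> Q^2 else True))"

definition Eminus :: "real \<Rightarrow> real \<Rightarrow> real \<Rightarrow> real" where
  "Eminus a b J = (let Q = Qpar a b J in 1 / (4 * b) * (Q^2 - a) * (3 * Q^2 + a))"

definition qpar :: "real \<Rightarrow> real \<Rightarrow> real \<Rightarrow> real" where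
  "qpar a b J = (THE q. J = q * (q^2 - a) / b \<and> sgn q = sgn J \<and> 0 < q^2 \<and> q^2 < a / 3)"

definition Eplus :: "real \<Rightarrow> real \<Rightarrow> real \<Rightarrow> real" where
  "Eplus a b J = (let q = qpar a b J in 1 / (4 * b) * (q^2 - a) * (3 * q^2 + a))"

definition D1 :: "real \<Rightarrow> real \<Rightarrow> real \<Rightarrow> real \<Rightarrow> bool" where
  "D1 a b J E \<longleftrightarrow> 0 < J \<and> J < sqrt (4 * a^3 / (27 * b^2)) \<and>
      Eminus a b J < E \<and> E < Eplus a b J"

definition D2 :: "real \<Rightarrow> real \<Rightarrow> real \<Rightarrow> real \<Rightarrow> bool" where
  "D2 a b J E \<longleftrightarrow> 0 < J \<and> Eminus a b J < E"

definition D3 :: "real \<Rightarrow> real \<Rightarrow> real \<Rightarrow> real \<Rightarrow> bool" where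
  "D3 a b J E \<longleftrightarrow> 0 < J \<and> Eminus a b J < E"

definition posroots :: "real \<Rightarrow> real \<Rightarrow> real \<Rightarrow> real \<Rightarrow> real set" where
  "posroots a b J E = {r. 0 < r \<and> E - VJ a b J r = 0}"

definition root1 :: "real \<Rightarrow> real \<Rightarrow> real \<Rightarrow> real \<Rightarrow> real" where
  "root1 a b J E = Min (posroots a b J E)"

definition root2 :: "real \<Rightarrow> real \<Rightarrow> real \<Rightarrow> real \<Rightarrow> real" where
  "root2 a b J E = Min (posroots a b J E - {root1 a b J E})"

definition Tper :: "real \<Rightarrow> real \<Rightarrow> real \<Rightarrow> real \<Rightarrow> real" where
  "Tper a b J E = 2 * integral {root1 a b J E .. root2 a b J E}
      (\<lambda>r. 1 / sqrt (2 * (E - VJ a b J r)))"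

definition Pi_poly :: "real \<Rightarrow> real \<Rightarrow> real \<Rightarrow> real \<Rightarrow> real \<Rightarrow> real" where
  "Pi_poly a b J E y = - b * y^3 - 2 * a * y^2 + 4 * E * y - 2 * J^2"

end

theory Submission
  imports Defs
begin

lemma subst_HK:
  fixes f g g' h :: "real \<Rightarrow> real"
  assumes Mf: "f \<in> borel_measurable borel"
  assumes fnn: "\<And>y. y \<in> {g a..g b} \<Longrightarrow> 0 \<le> f y"
  assumes derivg: "\<And>x. x \<in> {a..b} \<Longrightarrow> (g has_real_derivative g' x) (at x)"
  assumes contg': "continuous_on {a..b} g'"
  assumes derivg_nonneg: "\<And>x. x \<in> {a..b} \<Longrightarrow> g' x \<ge> 0"
  assumes ab: "a \<le> b"
  assumes hI: "(h has_integral I) {a..b}"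
  assumes hnn: "\<And>x. x \<in> {a..b} \<Longrightarrow> 0 \<le> h x"
  assumes eq: "\<And>x. x \<in> {a<..<b} \<Longrightarrow> f (g x) * g' x = h x"
  shows "(f has_integral I) {g a..g b}"
proof -
  have I0: "0 \<le> I" using has_integral_nonneg[OF hI hnn] by simp
  have Ms: "set_borel_measurable borel {g a..g b} f"
    unfolding set_borel_measurable_def using Mf by measurable
  have 1: "(\<integral>\<^sup>+x. f x * indicator {g a..g b} x \<partial>lborel) =
             (\<integral>\<^sup>+x. f (g x) * g' x * indicator {a..b} x \<partial>lborel)"
    by (rule nn_integral_substitution[OF Ms derivg contg' derivg_nonneg ab])
  also have "\<dots> = (\<integral>\<^sup>+x. ennreal (h x) * indicator {a..b} x \<partial>lborel)"
  proof (intro nn_integral_cong_AE)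
    show "AE x in lborel. ennreal (f (g x) * g' x * indicator {a..b} x) = ennreal (h x) * indicator {a..b} x"
      using AE_lborel_singleton[of a] AE_lborel_singleton[of b]
    proof eventually_elim
      case (elim x)
      then show ?case using eq[of x] by (auto simp: indicator_def)
    qed
  qed
  also have "\<dots> = ennreal I"
    by (rule nn_integral_has_integral_lebesgue'[OF hnn hI])
  finally have N: "(\<integral>\<^sup>+x. ennreal (f x * indicator {g a..g b} x) \<partial>lborel) = ennreal I" .
  have "((\<lambda>x. f x * indicator {g a..g b} x) has_integral I) UNIV"
    by (rule nn_integral_has_integral[OF _ _ N I0]) (use Mf fnn in \<open>auto simp: indicator_def\<close>)
  then have "((\<lambda>x. if x \<in> {g a..g b} then f x else 0) has_integral I) UNIV"
    by (rule has_integral_eq[rotated]) (simp add: indicator_def)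
  then show ?thesis using has_integral_restrict_UNIV by blast
qed

lemma main:
  fixes a b J E y1 y2 y3 :: real
  assumes bnz: "b \<noteq> 0"
    and roots: "Pi_poly a b J E y1 = 0" "Pi_poly a b J E y2 = 0" "Pi_poly a b J E y3 = 0"
    and order: "if b < 0 then 0 < y1 \<and> y1 < y2 \<and> y2 < y3 else y3 < 0 \<and> 0 < y1 \<and> y1 < y2"
  shows "Tper a b J E = sqrt 2 * integral {y1..y2}
            (\<lambda>y. 1 / sqrt (- b * (y - y1) * (y - y2) * (y - y3)))
       \<and> sqrt 2 * integral {y1..y2} (\<lambda>y. 1 / sqrt (- b * (y - y1) * (y - y2) * (y - y3)))
         = 2 * sqrt 2 * integral {0..pi/2}
            (\<lambda>\<phi>. 1 / sqrt (b * ((y1 * (cos \<phi>)^2 + y2 * (sin \<phi>)^2) - y3)))"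
proof -
  have y12: "0 < y1" "y1 < y2" using order by (auto split: if_splits)
  have y3: "(b < 0 \<and> y2 < y3) \<or> (0 < b \<and> y3 < 0)" using order bnz by (auto split: if_splits)
  have d12: "y1 \<noteq> y2" "y1 \<noteq> y3" "y2 \<noteq> y3" using y12 y3 by auto
  have h1: "-b*(y1^2+y1*y2+y2^2) - 2*a*(y1+y2) + 4*E = 0"
  proof -
    have "Pi_poly a b J E y1 - Pi_poly a b J E y2 = (y1-y2)*(-b*(y1^2+y1*y2+y2^2) - 2*a*(y1+y2) + 4*E)"
      unfolding Pi_poly_def by algebra
    then show ?thesis using roots d12 by simp
  qed
  have h2: "-b*(y1^2+y1*y3+y3^2) - 2*a*(y1+y3) + 4*E = 0"
  proof -
    have "Pi_poly a b J E y1 - Pi_poly a b J E y3 = (y1-y3)*(-b*(y1^2+y1*y3+y3^2) - 2*a*(y1+y3) + 4*E)"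
      unfolding Pi_poly_def by algebra
    then show ?thesis using roots d12 by simp
  qed
  have h3: "-b*(y1+y2+y3) - 2*a = 0"
  proof -
    have "(-b*(y1^2+y1*y2+y2^2) - 2*a*(y1+y2) + 4*E) - (-b*(y1^2+y1*y3+y3^2) - 2*a*(y1+y3) + 4*E)
       = (y2-y3)*(-b*(y1+y2+y3) - 2*a)" by algebra
    then have "(y2-y3)*(-b*(y1+y2+y3) - 2*a) = 0" using h1 h2 by linarith
    then show ?thesis using d12 by simp
  qed
  have Pfact: "Pi_poly a b J E y = -b*(y-y1)*(y-y2)*(y-y3)" for y
    using h1 h3 roots(1) unfolding Pi_poly_def by algebra
  define S where "S = (\<lambda>\<phi>::real. y1 * (cos \<phi>)^2 + y2 * (sin \<phi>)^2)"
  define S' where "S' = (\<lambda>\<phi>::real. 2 * (y2 - y1) * sin \<phi> * cos \<phi>)"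
  define B where "B = (\<lambda>\<phi>. b * (S \<phi> - y3))"
  define k where "k = (\<lambda>\<phi>. 1 / sqrt (B \<phi>))"
  have S1: "S \<phi> - y1 = (y2 - y1) * (sin \<phi>)^2" for \<phi>
    unfolding S_def using sin_cos_squared_add[of \<phi>] by algebra
  have S2: "y2 - S \<phi> = (y2 - y1) * (cos \<phi>)^2" for \<phi>
    unfolding S_def using sin_cos_squared_add[of \<phi>] by algebra
  have Srange: "y1 \<le> S \<phi> \<and> S \<phi> \<le> y2" for \<phi>
    using S1[of \<phi>] S2[of \<phi>] y12 by (smt (verit) mult_nonneg_nonneg zero_le_power2)
  have Bpos: "0 < B \<phi>" for \<phi>
    using y3 proof
    assume "b < 0 \<and> y2 < y3" then show ?thesis
      using Srange[of \<phi>] unfolding B_def by (intro mult_neg_neg) auto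
  next
    assume "0 < b \<and> y3 < 0" then show ?thesis
      using Srange[of \<phi>] y12 unfolding B_def by (intro mult_pos_pos) auto
  qed
  have S0: "S 0 = y1" and Spi: "S (pi/2) = y2" by (simp_all add: S_def)
  have Sder: "(S has_real_derivative S' x) (at x)" for x
    unfolding S_def S'_def
    by (auto intro!: derivative_eq_intros simp: power2_eq_square algebra_simps)
  have contS: "continuous_on UNIV S" unfolding S_def by (intro continuous_intros)
  have contS': "continuous_on UNIV S'" unfolding S'_def by (intro continuous_intros)
  have S'nn: "0 \<le> S' x" if "x \<in> {0..pi/2}" for x
    unfolding S'_def using that y12 sin_ge_zero[of x] cos_ge_zero[of x] by auto
  have S'pos: "0 < S' x" if "x \<in> {0<..<pi/2}" for x
    unfolding S'_def using that y12 sin_gt_zero[of x] cos_gt_zero[of x] by auto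
  have contk: "continuous_on {0..pi/2} k"
  proof -
    have contB: "continuous_on UNIV B" unfolding B_def S_def by (intro continuous_intros)
    show ?thesis unfolding k_def
      by (intro continuous_intros continuous_on_subset[OF contB]) (use Bpos in \<open>auto simp: less_imp_neq[symmetric]\<close>)
  qed
  define K where "K = integral {0..pi/2} k"
  have kI: "(k has_integral K) {0..pi/2}"
    unfolding K_def using contk integrable_continuous_interval by blast
  have knn: "0 \<le> k x" for x unfolding k_def using Bpos[of x] by simp
  have keyP: "-b*(S x-y1)*(S x-y2)*(S x-y3) = (S' x / 2)^2 * B x" for x
    unfolding B_def using S1[of x] S2[of x] unfolding S'_def by algebra
  have sqk: "sqrt ((S' x / 2)^2 * B x) = S' x / 2 * sqrt (B x)" if "x \<in> {0<..<pi/2}" for x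
    using S'pos[OF that] by (simp add: real_sqrt_mult)
  define Fy where "Fy = (\<lambda>y. 1 / sqrt (- b * (y - y1) * (y - y2) * (y - y3)))"
  have argnn: "0 \<le> - b * (y - y1) * (y - y2) * (y - y3)" if "y \<in> {y1..y2}" for y
  proof -
    have "0 < b * (y - y3)" using y3 that y12
      by (auto intro: mult_pos_pos mult_neg_neg)
    moreover have "0 \<le> (y - y1) * (y2 - y)" using that by auto
    moreover have "- b * (y - y1) * (y - y2) * (y - y3) = ((y - y1) * (y2 - y)) * (b * (y - y3))"
      by algebra
    ultimately show ?thesis by simp
  qed
  have yI: "(Fy has_integral 2 * K) {y1..y2}"
  proof -
    have "(Fy has_integral 2 * K) {S 0..S (pi/2)}"
    proof (rule subst_HK[where h = "\<lambda>x. 2 * k x" and g = S and g' = S' and a = 0 and b = "pi/2"])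
      show "Fy \<in> borel_measurable borel" unfolding Fy_def by measurable
      show "0 \<le> Fy y" if "y \<in> {S 0..S (pi/2)}" for y
        using argnn[of y] that unfolding Fy_def S0 Spi by simp
      show "(S has_real_derivative S' x) (at x)" if "x \<in> {0..pi/2}" for x by (rule Sder)
      show "continuous_on {0..pi/2} S'" using contS' by (rule continuous_on_subset) simp
      show "0 \<le> S' x" if "x \<in> {0..pi/2}" for x using S'nn that by simp
      show "(0::real) \<le> pi/2" by simp
      show "((\<lambda>x. 2 * k x) has_integral 2 * K) {0..pi/2}" using has_integral_mult_right[OF kI] by simp
      show "0 \<le> 2 * k x" for x using knn[of x] by simp
      show "Fy (S x) * S' x = 2 * k x" if "x \<in> {0<..<pi/2}" for x
        unfolding Fy_def keyP sqk[OF that] k_def using S'pos[OF that] Bpos[of x]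
        by (simp add: field_simps)
    qed
    then show ?thesis by (simp add: S0 Spi)
  qed
  have VJeq: "E - VJ a b J r = Pi_poly a b J E (r^2) / (4 * r^2)" if "r \<noteq> 0" for r
    using that unfolding VJ_def Pi_poly_def by (simp add: field_simps)
  define Fr where "Fr = (\<lambda>r. 1 / sqrt (2 * (E - VJ a b J r)))"
  define g where "g = (\<lambda>x. sqrt (S x))"
  define g' where "g' = (\<lambda>x. S' x / (2 * sqrt (S x)))"
  have Spos: "0 < S x" for x using Srange[of x] y12 by linarith
  have rI: "(Fr has_integral sqrt 2 * K) {sqrt y1..sqrt y2}"
  proof -
    have "(Fr has_integral sqrt 2 * K) {g 0..g (pi/2)}"
    proof (rule subst_HK[where h = "\<lambda>x. sqrt 2 * k x" and g = g and g' = g' and a = 0 and b = "pi/2"])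
      show "Fr \<in> borel_measurable borel" unfolding Fr_def VJ_def by (intro borel_measurable_divide measurable_compose[OF _ borel_measurable_sqrt] borel_measurable_times borel_measurable_add borel_measurable_diff borel_measurable_power borel_measurable_const measurable_ident) (simp_all add: measurable_ident_sets)
      show "0 \<le> Fr r" if "r \<in> {g 0..g (pi/2)}" for r
      proof -
        have r: "sqrt y1 \<le> r" "r \<le> sqrt y2" using that by (simp_all add: g_def S0 Spi)
        have r0: "0 < r" using r(1) y12(1) by (smt (verit) real_sqrt_gt_zero)
        have "(sqrt y1)^2 \<le> r^2" using r(1) y12(1) by (intro power_mono) auto
        moreover have "r^2 \<le> (sqrt y2)^2" using r(2) r0 by (intro power_mono) auto
        ultimately have "r^2 \<in> {y1..y2}" using y12 by simp
        then have "0 \<le> Pi_poly a b J E (r^2)" using argnn Pfact by simp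
        then show ?thesis unfolding Fr_def VJeq[OF less_imp_neq[OF r0, symmetric]] by simp
      qed
      show "(g has_real_derivative g' x) (at x)" if "x \<in> {0..pi/2}" for x
      proof -
        have D: "((\<lambda>x. sqrt (S x)) has_real_derivative (inverse (sqrt (S x)) / 2) * S' x) (at x)"
          by (rule DERIV_chain2[OF DERIV_real_sqrt[OF Spos] Sder])
        have eq: "inverse (sqrt (S x)) / 2 * S' x = S' x / (2 * sqrt (S x))"
          by (simp add: field_simps)
        show ?thesis using D unfolding g_def g'_def eq .
      qed
      show "continuous_on {0..pi/2} g'"
      proof -
        have c1: "continuous_on {0..pi/2} (\<lambda>x. 2 * sqrt (S x))"
          unfolding S_def by (intro continuous_intros)
        have c2: "continuous_on {0..pi/2} S'" using contS' by (rule continuous_on_subset) simp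
        show ?thesis unfolding g'_def using c2 c1
          by (rule continuous_on_divide) (use Spos in \<open>auto simp: less_imp_neq[symmetric]\<close>)
      qed
      show "0 \<le> g' x" if "x \<in> {0..pi/2}" for x using S'nn[OF that] Spos[of x] unfolding g'_def by simp
      show "(0::real) \<le> pi/2" by simp
      show "((\<lambda>x. sqrt 2 * k x) has_integral sqrt 2 * K) {0..pi/2}" using has_integral_mult_right[OF kI] by simp
      show "0 \<le> sqrt 2 * k x" for x using knn[of x] by simp
      show "Fr (g x) * g' x = sqrt 2 * k x" if "x \<in> {0<..<pi/2}" for x
      proof -
        have gx: "g x \<noteq> 0" "(g x)^2 = S x" using Spos[of x] unfolding g_def by auto
        have "2 * (E - VJ a b J (g x)) = ((S' x / 2)^2 * B x) / (2 * S x)"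
          unfolding VJeq[OF gx(1)] gx(2) Pfact keyP using Spos[of x] by (simp add: field_simps)
        then have "sqrt (2 * (E - VJ a b J (g x))) = sqrt ((S' x / 2)^2 * B x) / sqrt (2 * S x)"
          by (simp only: real_sqrt_divide)
        also have "\<dots> = (S' x / 2 * sqrt (B x)) / (sqrt 2 * sqrt (S x))"
          by (subst sqk[OF that]) (simp only: real_sqrt_mult)
        finally have sq: "sqrt (2 * (E - VJ a b J (g x))) = (S' x / 2 * sqrt (B x)) / (sqrt 2 * sqrt (S x))" .
        have p1: "0 < sqrt (B x)" "0 < sqrt (S x)" "0 < S' x" "0 < sqrt (2::real)"
          using S'pos[OF that] Bpos[of x] Spos[of x] by auto
        have "1 / ((S' x / 2 * sqrt (B x)) / (sqrt 2 * sqrt (S x))) * (S' x / (2 * sqrt (S x)))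
              = sqrt 2 * (1 / sqrt (B x))"
          using p1 by (simp add: field_simps)
        then show ?thesis unfolding Fr_def g'_def k_def sq .
      qed
    qed
    then show ?thesis by (simp add: g_def S0 Spi)
  qed
  have posr: "r \<in> posroots a b J E \<longleftrightarrow> 0 < r \<and> (r^2 = y1 \<or> r^2 = y2 \<or> r^2 = y3)" for r
  proof (cases "0 < r")
    case True
    then have "E - VJ a b J r = 0 \<longleftrightarrow> Pi_poly a b J E (r^2) = 0"
      using VJeq[of r] by simp
    also have "\<dots> \<longleftrightarrow> (r^2 = y1 \<or> r^2 = y2 \<or> r^2 = y3)"
      unfolding Pfact using bnz by simp
    finally show ?thesis using True unfolding posroots_def by simp
  qed (simp add: posroots_def)
  have sqr: "sqrt (r^2) = r" if "0 < r" for r using that by simp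
  have sub: "posroots a b J E \<subseteq> {sqrt y1, sqrt y2, sqrt y3}"
    using posr sqr by fastforce
  have fin: "finite (posroots a b J E)" using sub finite_subset by blast
  have m1: "sqrt y1 \<in> posroots a b J E" using posr y12 by simp
  have m2: "sqrt y2 \<in> posroots a b J E" using posr y12 by simp
  have lb: "r^2 \<ge> y1 \<and> (r^2 \<noteq> y1 \<longrightarrow> r^2 \<ge> y2)" if "r \<in> posroots a b J E" for r
  proof -
    have r: "0 < r" "r^2 = y1 \<or> r^2 = y2 \<or> r^2 = y3" using posr that by auto
    have "0 < r^2" using r by simp
    then show ?thesis using r(2) y3 y12 by auto
  qed
  have R1: "root1 a b J E = sqrt y1"
    unfolding root1_def
  proof (rule Min_eqI[OF fin _ m1])
    fix r assume "r \<in> posroots a b J E"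
    then have "y1 \<le> r^2" "0 < r" using lb posr by auto
    then show "sqrt y1 \<le> r" using real_sqrt_le_mono sqr by metis
  qed
  have R2: "root2 a b J E = sqrt y2"
    unfolding root2_def R1
  proof (rule Min_eqI)
    show "finite (posroots a b J E - {sqrt y1})" using fin by simp
    show "sqrt y2 \<in> posroots a b J E - {sqrt y1}" using m2 y12 by simp
    fix r assume r: "r \<in> posroots a b J E - {sqrt y1}"
    then have r0: "0 < r" using posr by auto
    have "r^2 \<noteq> y1" using r sqr[OF r0] by auto
    then have "y2 \<le> r^2" using lb r by auto
    then show "sqrt y2 \<le> r" using real_sqrt_le_mono sqr[OF r0] by metis
  qed
  have T: "Tper a b J E = 2 * (sqrt 2 * K)"
    unfolding Tper_def R1 R2 using rI unfolding Fr_def by (simp add: integral_unique)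
  have Y: "integral {y1..y2} (\<lambda>y. 1 / sqrt (- b * (y - y1) * (y - y2) * (y - y3))) = 2 * K"
    using yI unfolding Fy_def by (rule integral_unique)
  have P: "integral {0..pi/2} (\<lambda>\<phi>. 1 / sqrt (b * ((y1 * (cos \<phi>)^2 + y2 * (sin \<phi>)^2) - y3))) = K"
    unfolding K_def k_def B_def S_def ..
  show ?thesis unfolding T Y P by simp
qed

theorem lemma1:
  fixes a b J E y1 y2 y3 :: real
  assumes cases: "(b < 0 \<and> 0 < a \<and> D1 a b J E) \<or> (0 < b \<and> 0 \<le> a \<and> D2 a b J E)
                  \<or> (0 < b \<and> a < 0 \<and> D3 a b J E)"
    and roots: "Pi_poly a b J E y1 = 0" "Pi_poly a b J E y2 = 0" "Pi_poly a b J E y3 = 0"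
    and order: "if b < 0 then 0 < y1 \<and> y1 < y2 \<and> y2 < y3 else y3 < 0 \<and> 0 < y1 \<and> y1 < y2"
  shows "Tper a b J E = sqrt 2 * integral {y1..y2}
            (\<lambda>y. 1 / sqrt (- b * (y - y1) * (y - y2) * (y - y3)))
       \<and> sqrt 2 * integral {y1..y2} (\<lambda>y. 1 / sqrt (- b * (y - y1) * (y - y2) * (y - y3)))
         = 2 * sqrt 2 * integral {0..pi/2}
            (\<lambda>\<phi>. 1 / sqrt (b * ((y1 * (cos \<phi>)^2 + y2 * (sin \<phi>)^2) - y3)))"
proof -
  have "b \<noteq> 0" using cases by auto
  then show ?thesis using main roots order by blast
qed

end
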